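(* For fixed positive integer $t$, the two-variable function $(n,k)\mapsto\hat L_0(n,k,t)$ (on positive reals with $1<n/k<t$) has partial derivatives \[ \frac{\partial}{\partial k}\hat L_0(n,k,t)=-\frac{n}{k^2}\big(\log n-y_t(n/k)\big)+\frac{n}{k^2}-\frac1k\quad\text{and}\quad \frac{\partial}{\partial n}\hat L_0(n,k,t)=\frac{\log n-y_t(n/k)}{k}. \]
   Context: $d_i=2^{\binom i2}i!$. For positive integer $t$ and real $1<\rho<t$, $y_t(\rho)$ is defined by: $x_t(\rho),y_t(\rho)$ are the unique reals $x,y$ with $\sum_{i=1}^t e^{x+iy}d_i^{-1}=1$ and $\sum_{i=1}^t ie^{x+iy}d_i^{-1}=\rho$. $\tilde L_0(\rho,k,t)=\sup\{\rho\log(\rho k)-\log k-\rho+1-\sum_ip_i\log(p_id_i)\}$, the supremum over $(p_i)_{i=1}^t\in[0,1]^t$ with $\sum_ip_i=1$, $\sum_iip_i=\rho$ (with $0\log0=0$), and $\hat L_0(n,k,t)=\tilde L_0(n/k,k,t)$. Logarithms are natural. *)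

theory Defs
  imports "HOL-Analysis.Analysis"
begin

definition dcoef :: "nat \<Rightarrow> real" where
  "dcoef i = 2 ^ (i choose 2) * fact i"

definition xy_t :: "nat \<Rightarrow> real \<Rightarrow> real \<times> real" where
  "xy_t t \<rho> = (THE (x, y).
      (\<Sum>i=1..t. exp (x + real i * y) / dcoef i) = 1 \<and>
      (\<Sum>i=1..t. real i * exp (x + real i * y) / dcoef i) = \<rho>)"

definition x_t :: "nat \<Rightarrow> real \<Rightarrow> real" where
  "x_t t \<rho> = fst (xy_t t \<rho>)"

definition y_t :: "nat \<Rightarrow> real \<Rightarrow> real" where
  "y_t t \<rho> = snd (xy_t t \<rho>)"

text \<open>Note: ln 0 = 0 in Isabelle, so p * ln (p * d) = 0 when p = 0 (the convention 0 log 0 = 0).\<close>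
definition L0_tilde :: "real \<Rightarrow> real \<Rightarrow> nat \<Rightarrow> real" where
  "L0_tilde \<rho> k t = Sup {\<rho> * ln (\<rho> * k) - ln k - \<rho> + 1
        - (\<Sum>i=1..t. p i * ln (p i * dcoef i)) | p :: nat \<Rightarrow> real.
        (\<forall>i\<in>{1..t}. 0 \<le> p i \<and> p i \<le> 1) \<and>
        (\<Sum>i=1..t. p i) = 1 \<and> (\<Sum>i=1..t. real i * p i) = \<rho>}"

definition L0_hat :: "real \<Rightarrow> real \<Rightarrow> nat \<Rightarrow> real" where
  "L0_hat n k t = L0_tilde (n / k) k t"

end

theory Submission imports Defs begin

lemma dcoef_pos: "dcoef i > 0" by (simp add: dcoef_def)
lemma dcoef_ne[simp]: "dcoef i \<noteq> 0" using dcoef_pos[of i] by simp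

lemma ln_strict: fixes u :: real assumes "u > 0" "u \<noteq> 1" shows "ln u < u - 1"
proof -
  have s: "sqrt u > 0" using assms by simp
  have "ln (sqrt u) \<le> sqrt u - 1" by (rule ln_le_minus_one[OF s])
  moreover have "ln (sqrt u) = ln u / 2" using assms by (simp add: ln_sqrt)
  moreover have "sqrt u - 1 \<noteq> 0" using assms by simp
  hence "(sqrt u - 1)^2 > 0" by simp
  moreover have "(sqrt u)^2 = u" using assms by simp
  ultimately show ?thesis by (simp add: power2_eq_square algebra_simps)
qed

lemma gibbs_term:
  fixes p d a :: real assumes "0 \<le> p" "0 < d"
  shows "p - exp a / d \<le> p * ln (p*d) - p*a \<and> (p \<noteq> exp a / d \<longrightarrow> p - exp a / d < p * ln (p*d) - p*a)"
proof (cases "p = 0")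
  case True thus ?thesis using assms by simp
next
  case False
  hence pp: "p > 0" using assms by simp
  define u where "u = exp a / (p*d)"
  have u: "u > 0" using pp assms by (simp add: u_def)
  have ln_eq: "ln (p*d) - a = - ln u" using pp assms by (simp add: u_def ln_div)
  have pu: "p * (u - 1) = exp a / d - p" using pp assms by (simp add: u_def field_simps)
  have "ln u \<le> u - 1" by (rule ln_le_minus_one[OF u])
  hence "p * ln u \<le> p*(u - 1)" using pp by (simp add: mult_left_mono)
  moreover have "p \<noteq> exp a / d \<Longrightarrow> p * ln u < p*(u - 1)"
  proof -
    assume "p \<noteq> exp a / d"
    hence "u \<noteq> 1" using pp assms by (auto simp: u_def field_simps)
    hence "ln u < u - 1" using ln_strict u by blast
    thus ?thesis using pp by simp
  qed
  moreover have "p * ln (p*d) - p*a = - (p * ln u)"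
  proof -
    have "p * ln (p*d) - p*a = p * (ln (p*d) - a)" by (simp add: right_diff_distrib)
    also have "\<dots> = - (p * ln u)" using ln_eq by simp
    finally show ?thesis .
  qed
  ultimately show ?thesis using pu by auto
qed

definition sol :: "nat \<Rightarrow> real \<Rightarrow> real \<Rightarrow> real \<Rightarrow> bool" where
  "sol t \<rho> x y \<longleftrightarrow> (\<Sum>i=1..t. exp (x + real i * y) / dcoef i) = 1 \<and>
      (\<Sum>i=1..t. real i * exp (x + real i * y) / dcoef i) = \<rho>"

lemma gibbs:
  assumes p: "\<forall>i\<in>{1..t}. 0 \<le> p i" and ps: "(\<Sum>i=1..t. p i) = 1"
    and q: "(\<Sum>i=1..t. exp (x + real i * y) / dcoef i) = 1"
  shows "(\<Sum>i=1..t. p i * (x + real i * y)) \<le> (\<Sum>i=1..t. p i * ln (p i * dcoef i))"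
    and "(\<Sum>i=1..t. p i * (x + real i * y)) = (\<Sum>i=1..t. p i * ln (p i * dcoef i))
         \<Longrightarrow> \<forall>i\<in>{1..t}. p i = exp (x + real i * y) / dcoef i"
proof -
  let ?f = "\<lambda>i. p i - exp (x + real i * y) / dcoef i"
  let ?g = "\<lambda>i. p i * ln (p i * dcoef i) - p i * (x + real i * y)"
  have T: "\<And>i. i \<in> {1..t} \<Longrightarrow> ?f i \<le> ?g i \<and> (p i \<noteq> exp (x + real i * y) / dcoef i \<longrightarrow> ?f i < ?g i)"
    using gibbs_term p dcoef_pos by blast
  have f0: "(\<Sum>i=1..t. ?f i) = 0" using ps q by (simp add: sum_subtractf)
  have "(\<Sum>i=1..t. ?f i) \<le> (\<Sum>i=1..t. ?g i)" by (rule sum_mono) (use T in blast)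
  thus "(\<Sum>i=1..t. p i * (x + real i * y)) \<le> (\<Sum>i=1..t. p i * ln (p i * dcoef i))"
    using f0 by (simp add: sum_subtractf)
  assume eq: "(\<Sum>i=1..t. p i * (x + real i * y)) = (\<Sum>i=1..t. p i * ln (p i * dcoef i))"
  show "\<forall>i\<in>{1..t}. p i = exp (x + real i * y) / dcoef i"
  proof (rule ccontr)
    assume "\<not> ?thesis"
    then obtain j where j: "j \<in> {1..t}" "p j \<noteq> exp (x + real j * y) / dcoef j" by blast
    have "(\<Sum>i=1..t. ?f i) < (\<Sum>i=1..t. ?g i)"
      proof (rule sum_strict_mono_ex1)
        show "\<forall>i\<in>{1..t}. ?f i \<le> ?g i" using T by blast
        show "\<exists>a\<in>{1..t}. ?f a < ?g a" using T j by blast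
      qed simp
    thus False using f0 eq by (simp add: sum_subtractf)
  qed
qed


lemma lin_sum: "(\<Sum>i=1..t. p i * (x + real i * y)) = x * (\<Sum>i=1..t. p i) + y * (\<Sum>i=1..t. real i * p i)"
  by (simp add: sum.distrib sum_distrib_left algebra_simps)

lemma sol_ent:
  assumes "sol t \<rho> x y"
  shows "(\<Sum>i=1..t. (exp (x + real i * y) / dcoef i) * ln ((exp (x + real i * y) / dcoef i) * dcoef i)) = x + \<rho> * y"
proof -
  have "(\<Sum>i=1..t. (exp (x + real i * y) / dcoef i) * ln ((exp (x + real i * y) / dcoef i) * dcoef i))
     = (\<Sum>i=1..t. (exp (x + real i * y) / dcoef i) * (x + real i * y))"
    using dcoef_pos by (intro sum.cong) (auto simp: less_imp_neq[symmetric])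
  also have "\<dots> = x + \<rho> * y" using assms unfolding lin_sum sol_def by (simp add: mult.commute)
  finally show ?thesis .
qed

lemma sol_cmp:
  assumes "sol t \<rho> x y" "sol t \<rho>' x' y'"
  shows "x' + \<rho> * y' \<le> x + \<rho> * y"
    and "x' + \<rho> * y' = x + \<rho> * y \<Longrightarrow> \<forall>i\<in>{1..t}. exp (x + real i * y) / dcoef i = exp (x' + real i * y') / dcoef i"
proof -
  define p where "p i = exp (x + real i * y) / dcoef i" for i
  have p0: "\<forall>i\<in>{1..t}. 0 \<le> p i" using dcoef_pos by (simp add: p_def less_imp_le)
  have ps: "(\<Sum>i=1..t. p i) = 1" "(\<Sum>i=1..t. real i * p i) = \<rho>" using assms(1) by (simp_all add: p_def sol_def)
  have q: "(\<Sum>i=1..t. exp (x' + real i * y') / dcoef i) = 1" using assms(2) by (simp add: sol_def)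
  have e: "(\<Sum>i=1..t. p i * ln (p i * dcoef i)) = x + \<rho> * y" using sol_ent[OF assms(1)] by (simp add: p_def)
  have l: "(\<Sum>i=1..t. p i * (x' + real i * y')) = x' + \<rho> * y'" unfolding lin_sum using ps by (simp add: mult.commute)
  show "x' + \<rho> * y' \<le> x + \<rho> * y" using gibbs(1)[OF p0 ps(1) q] e l by linarith
  assume "x' + \<rho> * y' = x + \<rho> * y"
  hence "(\<Sum>i=1..t. p i * (x' + real i * y')) = (\<Sum>i=1..t. p i * ln (p i * dcoef i))" using e l by linarith
  from gibbs(2)[OF p0 ps(1) q this]
  show "\<forall>i\<in>{1..t}. exp (x + real i * y) / dcoef i = exp (x' + real i * y') / dcoef i"
    by (simp add: p_def)
qed

lemma sol_uniq:
  assumes "2 \<le> t" "sol t \<rho> x y" "sol t \<rho> x' y'"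
  shows "x = x' \<and> y = y'"
proof -
  have "x' + \<rho> * y' = x + \<rho> * y" using sol_cmp(1)[OF assms(2,3)] sol_cmp(1)[OF assms(3,2)] by simp
  hence A: "\<forall>i\<in>{1..t}. exp (x + real i * y) / dcoef i = exp (x' + real i * y') / dcoef i"
    using sol_cmp(2)[OF assms(2,3)] by simp
  have "\<And>i. i \<in> {1..t} \<Longrightarrow> x + real i * y = x' + real i * y'"
  proof -
    fix i assume "i \<in> {1..t}"
    hence "exp (x + real i * y) / dcoef i = exp (x' + real i * y') / dcoef i" using A by blast
    hence "exp (x + real i * y) = exp (x' + real i * y')" using dcoef_pos[of i] by (simp add: divide_cancel_right less_imp_neq[symmetric])
    thus "x + real i * y = x' + real i * y'" by simp
  qed
  from this[of 1] this[of 2] assms(1) show ?thesis by simp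
qed

lemma xy_eq:
  assumes "2 \<le> t" "sol t \<rho> x y"
  shows "x_t t \<rho> = x" "y_t t \<rho> = y"
proof -
  have "xy_t t \<rho> = (x, y)" unfolding xy_t_def
  proof (rule the_equality)
    show "case (x, y) of (x, y) \<Rightarrow> (\<Sum>i=1..t. exp (x + real i * y) / dcoef i) = 1 \<and>
      (\<Sum>i=1..t. real i * exp (x + real i * y) / dcoef i) = \<rho>" using assms(2) by (simp add: sol_def)
  next
    fix z assume z: "case z of (x, y) \<Rightarrow> (\<Sum>i=1..t. exp (x + real i * y) / dcoef i) = 1 \<and>
      (\<Sum>i=1..t. real i * exp (x + real i * y) / dcoef i) = \<rho>"
    obtain a b where ab: "z = (a, b)" by (cases z)
    have "sol t \<rho> a b" using z ab by (simp add: sol_def)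
    thus "z = (x, y)" using sol_uniq[OF assms(1) _ assms(2)] ab by blast
  qed
  thus "x_t t \<rho> = x" "y_t t \<rho> = y" by (simp_all add: x_t_def y_t_def)
qed

definition Zf :: "nat \<Rightarrow> real \<Rightarrow> real" where
  "Zf t z = (\<Sum>i=1..t. exp (real i * z) / dcoef i)"
definition Gf :: "nat \<Rightarrow> real \<Rightarrow> real" where
  "Gf t z = (\<Sum>i=1..t. real i * exp (real i * z) / dcoef i) / Zf t z"

lemma Zf_pos: "1 \<le> t \<Longrightarrow> Zf t z > 0"
  unfolding Zf_def using dcoef_pos by (intro sum_pos) auto

lemma sol_G: assumes "1 \<le> t" shows "sol t (Gf t z) (- ln (Zf t z)) z"
proof -
  have Z: "Zf t z > 0" using Zf_pos assms by blast
  have e: "\<And>i. exp (- ln (Zf t z) + real i * z) = exp (real i * z) / Zf t z"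
    using Z by (subst exp_add) (simp add: exp_minus field_simps)
  have s: "(\<Sum>i=1..t. f i * exp (real i * z) / Zf t z / dcoef i) = (\<Sum>i=1..t. f i * exp (real i * z) / dcoef i) / Zf t z" for f :: "nat \<Rightarrow> real"
    unfolding sum_divide_distrib by (intro sum.cong refl) (simp add: divide_divide_eq_left mult.commute)
  have s1: "(\<Sum>i=1..t. exp (real i * z) / Zf t z / dcoef i) = Zf t z / Zf t z"
    using s[of "\<lambda>_. 1"] by (simp add: Zf_def)
  have s2: "(\<Sum>i=1..t. real i * (exp (real i * z) / Zf t z) / dcoef i) = Gf t z"
    using s[of real] by (simp add: Gf_def)
  show ?thesis unfolding sol_def e using Z s1 s2 by simp
qed


lemma lim_bot_term: assumes "1 \<le> i" shows "((\<lambda>z::real. exp ((real i - 1) * z)) \<longlongrightarrow> (if i = 1 then 1 else 0)) at_bot"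
proof (cases "i = 1")
  case True thus ?thesis by simp
next
  case False
  hence c: "real i - 1 > 0" using assms by simp
  have "filterlim (\<lambda>z::real. (real i - 1) * z) at_bot at_bot"
    by (rule filterlim_tendsto_pos_mult_at_bot[OF tendsto_const c filterlim_ident])
  from filterlim_compose[OF exp_at_bot this] False show ?thesis by simp
qed

lemma lim_top_term: assumes "i \<le> t" shows "((\<lambda>z::real. exp ((real i - real t) * z)) \<longlongrightarrow> (if i = t then 1 else 0)) at_top"
proof (cases "i = t")
  case True thus ?thesis by simp
next
  case False
  hence c: "real i - real t < 0" using assms by simp
  have "filterlim (\<lambda>z::real. (real i - real t) * z) at_bot at_top"
    by (rule filterlim_tendsto_neg_mult_at_bot[OF tendsto_const c filterlim_ident])
  from filterlim_compose[OF exp_at_bot this] False show ?thesis by simp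
qed

lemma dcoef1: "dcoef 1 = 1" "dcoef (Suc 0) = 1" by (simp_all add: dcoef_def binomial_eq_0)

lemma G_bot: assumes "1 \<le> t" shows "(Gf t \<longlongrightarrow> 1) at_bot"
proof -
  define Nb where "Nb z = (\<Sum>i=1..t. real i * exp ((real i - 1) * z) / dcoef i)" for z
  define Db where "Db z = (\<Sum>i=1..t. exp ((real i - 1) * z) / dcoef i)" for z
  have ex: "\<And>i z. exp (real i * z) = exp z * exp ((real i - 1) * z)"
    by (simp add: exp_add[symmetric] algebra_simps)
  have eq: "Gf t z = Nb z / Db z" for z
  proof -
    have "Gf t z = (exp z * Nb z) / (exp z * Db z)"
      unfolding Gf_def Zf_def Nb_def Db_def sum_distrib_left
      by (intro arg_cong2[where f="(/)"] sum.cong) (simp_all add: ex)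
    thus ?thesis by simp
  qed
  have "(Nb \<longlongrightarrow> (\<Sum>i=1..t. real i * (if i = 1 then 1 else 0) / dcoef i)) at_bot"
    unfolding Nb_def by (intro tendsto_intros lim_bot_term) auto
  moreover have "(\<Sum>i=1..t. real i * (if i = 1 then 1 else 0) / dcoef i) = 1"
  proof -
    have "(\<Sum>i=1..t. real i * (if i = 1 then 1 else 0) / dcoef i) = (\<Sum>i=1..t. if i = 1 then real i / dcoef i else 0)"
      by (rule sum.cong) auto
    also have "\<dots> = 1" using assms by (simp add: dcoef1)
    finally show ?thesis .
  qed
  moreover have "(Db \<longlongrightarrow> (\<Sum>i=1..t. (if i = 1 then 1 else 0) / dcoef i)) at_bot"
    unfolding Db_def by (intro tendsto_intros lim_bot_term) auto
  moreover have "(\<Sum>i=1..t. (if i = 1 then 1 else 0) / dcoef i) = 1"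
  proof -
    have "(\<Sum>i=1..t. (if i = 1 then 1 else 0) / dcoef i) = (\<Sum>i=1..t. if i = 1 then 1 / dcoef i else 0)"
      by (rule sum.cong) auto
    also have "\<dots> = 1" using assms by (simp add: dcoef1)
    finally show ?thesis .
  qed
  ultimately have "((\<lambda>z. Nb z / Db z) \<longlongrightarrow> 1 / 1) at_bot" by (intro tendsto_divide) auto
  moreover have "Gf t = (\<lambda>z. Nb z / Db z)" using eq by (simp add: fun_eq_iff)
  ultimately show ?thesis by simp
qed

lemma G_top: assumes "1 \<le> t" shows "(Gf t \<longlongrightarrow> real t) at_top"
proof -
  define Nb where "Nb z = (\<Sum>i=1..t. real i * exp ((real i - real t) * z) / dcoef i)" for z
  define Db where "Db z = (\<Sum>i=1..t. exp ((real i - real t) * z) / dcoef i)" for z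
  have ex: "exp (real i * z) = exp (real t * z) * exp ((real i - real t) * z)" for i z
  proof -
    have "real i * z = real t * z + (real i - real t) * z" by (simp add: algebra_simps)
    hence "exp (real i * z) = exp (real t * z + (real i - real t) * z)" by (rule arg_cong)
    thus ?thesis by (simp only: exp_add)
  qed
  have eq: "Gf t z = Nb z / Db z" for z
  proof -
    have e1: "real i * exp (real i * z) / dcoef i = exp (real t * z) * (real i * exp ((real i - real t) * z) / dcoef i)" for i
      by (subst ex[of i z]) (simp only: mult_ac times_divide_eq_right)
    have e2: "exp (real i * z) / dcoef i = exp (real t * z) * (exp ((real i - real t) * z) / dcoef i)" for i
      by (subst ex[of i z]) (simp only: mult_ac times_divide_eq_right)
    have "Gf t z = (exp (real t * z) * Nb z) / (exp (real t * z) * Db z)"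
      unfolding Gf_def Zf_def Nb_def Db_def sum_distrib_left
      by (intro arg_cong2[where f="(/)"] sum.cong) (simp_all only: e1 e2)
    thus ?thesis by simp
  qed
  have N0: "(Nb \<longlongrightarrow> (\<Sum>i=1..t. real i * (if i = t then 1 else 0) / dcoef i)) at_top"
    unfolding Nb_def
  proof (rule tendsto_sum)
    fix i assume i: "i \<in> {1..t}"
    have T: "((\<lambda>z. exp ((real i - real t) * z)) \<longlongrightarrow> (if i = t then 1 else 0)) at_top" using lim_top_term i by simp
    show "((\<lambda>z. real i * exp ((real i - real t) * z) / dcoef i) \<longlongrightarrow> real i * (if i = t then 1 else 0) / dcoef i) at_top"
      by (rule tendsto_divide[OF tendsto_mult_left[OF T] tendsto_const]) simp
  qed
  have S1: "(\<Sum>i=1..t. real i * (if i = t then 1 else 0) / dcoef i) = real t / dcoef t"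
  proof -
    have "(\<Sum>i=1..t. real i * (if i = t then 1 else 0) / dcoef i) = (\<Sum>i=1..t. if i = t then real i / dcoef i else 0)"
      by (rule sum.cong) auto
    also have "\<dots> = real t / dcoef t" using assms by simp
    finally show ?thesis .
  qed
  have D0: "(Db \<longlongrightarrow> (\<Sum>i=1..t. (if i = t then 1 else 0) / dcoef i)) at_top"
    unfolding Db_def
  proof (rule tendsto_sum)
    fix i assume i: "i \<in> {1..t}"
    have T: "((\<lambda>z. exp ((real i - real t) * z)) \<longlongrightarrow> (if i = t then 1 else 0)) at_top" using lim_top_term i by simp
    show "((\<lambda>z. exp ((real i - real t) * z) / dcoef i) \<longlongrightarrow> (if i = t then 1 else 0) / dcoef i) at_top"
      by (rule tendsto_divide[OF T tendsto_const]) simp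
  qed
  have S2: "(\<Sum>i=1..t. (if i = t then 1 else 0) / dcoef i) = 1 / dcoef t"
  proof -
    have "(\<Sum>i=1..t. (if i = t then 1 else 0) / dcoef i) = (\<Sum>i=1..t. if i = t then 1 / dcoef i else 0)"
      by (rule sum.cong) auto
    also have "\<dots> = 1 / dcoef t" using assms by simp
    finally show ?thesis .
  qed
  have N: "(Nb \<longlongrightarrow> real t / dcoef t) at_top" using N0 unfolding S1 .
  have D: "(Db \<longlongrightarrow> 1 / dcoef t) at_top" using D0 unfolding S2 .
  have ND: "((\<lambda>z. Nb z / Db z) \<longlongrightarrow> (real t / dcoef t) / (1 / dcoef t)) at_top"
    by (rule tendsto_divide[OF N D]) simp
  have v: "(real t / dcoef t) / (1 / dcoef t) = real t" by simp
  have G: "Gf t = (\<lambda>z. Nb z / Db z)" using eq by (simp add: fun_eq_iff)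
  show ?thesis unfolding G using ND unfolding v .
qed

lemma G_cont: assumes "1 \<le> t" shows "continuous_on S (Gf t)"
proof -
  have "continuous_on S (\<lambda>z. (\<Sum>i=1..t. real i * exp (real i * z) / dcoef i) / Zf t z)"
    unfolding Zf_def using Zf_pos[OF assms] unfolding Zf_def
    by (intro continuous_intros) (auto simp: less_imp_neq[symmetric])
  thus ?thesis unfolding Gf_def[abs_def] .
qed

lemma sol_exists:
  assumes "1 \<le> t" "1 < \<rho>" "\<rho> < real t"
  shows "\<exists>x y. sol t \<rho> x y"
proof -
  have "eventually (\<lambda>z. Gf t z < \<rho>) at_bot" using order_tendstoD(2)[OF G_bot[OF assms(1)] assms(2)] .
  then obtain N1 where N1: "\<forall>z\<le>N1. Gf t z < \<rho>" by (auto simp: eventually_at_bot_linorder)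
  have "eventually (\<lambda>z. \<rho> < Gf t z) at_top" using order_tendstoD(1)[OF G_top[OF assms(1)] assms(3)] .
  then obtain N2 where N2: "\<forall>z\<ge>N2. \<rho> < Gf t z" by (auto simp: eventually_at_top_linorder)
  let ?a = "min N1 N2" and ?b = "max N1 N2"
  have "\<exists>z. ?a \<le> z \<and> z \<le> ?b \<and> Gf t z = \<rho>"
    using N1 N2 G_cont[OF assms(1)] by (intro IVT') (auto simp: less_imp_le)
  then obtain z where "Gf t z = \<rho>" by blast
  thus ?thesis using sol_G[OF assms(1), of z] by auto
qed


definition Ff :: "nat \<Rightarrow> real \<Rightarrow> real" where
  "Ff t \<rho> = - x_t t \<rho> - \<rho> * y_t t \<rho>"

lemma sol_xy:
  assumes "2 \<le> t" "1 < \<rho>" "\<rho> < real t"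
  shows "sol t \<rho> (x_t t \<rho>) (y_t t \<rho>)"
proof -
  obtain x y where "sol t \<rho> x y" using sol_exists assms by fastforce
  thus ?thesis using xy_eq[OF assms(1)] by simp
qed

lemma sol_mono:
  assumes "sol t \<rho> x y" "sol t \<rho>' x' y'"
  shows "(\<rho>' - \<rho>) * (y' - y) \<ge> 0"
  using sol_cmp(1)[OF assms] sol_cmp(1)[OF assms(2,1)] by (simp add: algebra_simps)

lemma Y_cont:
  assumes t: "2 \<le> t" and r: "1 < \<rho>0" "\<rho>0 < real t"
  shows "((y_t t) \<longlongrightarrow> y_t t \<rho>0) (at \<rho>0)"
  unfolding LIM_eq
proof (intro allI impI)
  fix r :: real assume "r > 0"
  define e where "e = r / 2"
  have e: "e > 0" "e < r" using \<open>r > 0\<close> by (auto simp: e_def)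
  have t1: "1 \<le> t" using t by simp
  define y0 where "y0 = y_t t \<rho>0"
  have s0: "sol t \<rho>0 (x_t t \<rho>0) y0" using sol_xy[OF t r] by (simp add: y0_def)
  define \<rho>1 where "\<rho>1 = Gf t (y0 - e)"
  define \<rho>2 where "\<rho>2 = Gf t (y0 + e)"
  have s1: "sol t \<rho>1 (- ln (Zf t (y0 - e))) (y0 - e)" using sol_G[OF t1] by (simp add: \<rho>1_def)
  have s2: "sol t \<rho>2 (- ln (Zf t (y0 + e))) (y0 + e)" using sol_G[OF t1] by (simp add: \<rho>2_def)
  have "\<rho>1 \<le> \<rho>0" using sol_mono[OF s0 s1] e by (simp add: mult_le_0_iff)
  moreover have "\<rho>1 \<noteq> \<rho>0"
  proof
    assume "\<rho>1 = \<rho>0"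
    hence "sol t \<rho>0 (- ln (Zf t (y0 - e))) (y0 - e)" using s1 by simp
    from sol_uniq[OF t s0 this] e show False by simp
  qed
  ultimately have l1: "\<rho>1 < \<rho>0" by simp
  have "\<rho>0 \<le> \<rho>2" using sol_mono[OF s0 s2] e by (simp add: zero_le_mult_iff)
  moreover have "\<rho>2 \<noteq> \<rho>0"
  proof
    assume "\<rho>2 = \<rho>0"
    hence "sol t \<rho>0 (- ln (Zf t (y0 + e))) (y0 + e)" using s2 by simp
    from sol_uniq[OF t s0 this] e show False by simp
  qed
  ultimately have l2: "\<rho>0 < \<rho>2" by simp
  define d where "d = min (min (\<rho>0 - \<rho>1) (\<rho>2 - \<rho>0)) (min (\<rho>0 - 1) (real t - \<rho>0))"
  have "d > 0" using l1 l2 r by (simp add: d_def)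
  moreover have "\<forall>z. z \<noteq> \<rho>0 \<and> norm (z - \<rho>0) < d \<longrightarrow> norm (y_t t z - y0) < r"
  proof (intro allI impI)
    fix z assume z: "z \<noteq> \<rho>0 \<and> norm (z - \<rho>0) < d"
    have dl: "d \<le> \<rho>0 - \<rho>1" "d \<le> \<rho>2 - \<rho>0" "d \<le> \<rho>0 - 1" "d \<le> real t - \<rho>0" by (simp_all add: d_def)
    have "\<bar>z - \<rho>0\<bar> < d" using z by simp
    hence "- d < z - \<rho>0" "z - \<rho>0 < d" by (simp_all add: abs_less_iff)
    hence zr: "1 < z" "z < real t" "\<rho>1 < z" "z < \<rho>2" using dl by linarith+
    have sz: "sol t z (x_t t z) (y_t t z)" using sol_xy[OF t zr(1,2)] .
    have "y_t t z - (y0 - e) \<ge> 0" using sol_mono[OF s1 sz] zr by (simp add: zero_le_mult_iff)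
    moreover have "(y0 + e) - y_t t z \<ge> 0" using sol_mono[OF sz s2] zr by (simp add: zero_le_mult_iff)
    ultimately show "norm (y_t t z - y0) < r" using e by simp
  qed
  ultimately show "\<exists>s>0. \<forall>z. z \<noteq> \<rho>0 \<and> norm (z - \<rho>0) < s \<longrightarrow> norm (y_t t z - y_t t \<rho>0) < r"
    unfolding y0_def by blast
qed

lemma F_bounds:
  assumes t: "2 \<le> t" and r: "1 < \<rho>" "\<rho> < real t" "1 < \<rho>'" "\<rho>' < real t"
  shows "Ff t \<rho>' - Ff t \<rho> \<le> - (\<rho>' - \<rho>) * y_t t \<rho>"
    and "- (\<rho>' - \<rho>) * y_t t \<rho>' \<le> Ff t \<rho>' - Ff t \<rho>"
proof -
  have s: "sol t \<rho> (x_t t \<rho>) (y_t t \<rho>)" using sol_xy[OF t r(1,2)] .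
  have s': "sol t \<rho>' (x_t t \<rho>') (y_t t \<rho>')" using sol_xy[OF t r(3,4)] .
  show "Ff t \<rho>' - Ff t \<rho> \<le> - (\<rho>' - \<rho>) * y_t t \<rho>"
    using sol_cmp(1)[OF s' s] by (simp add: Ff_def algebra_simps)
  show "- (\<rho>' - \<rho>) * y_t t \<rho>' \<le> Ff t \<rho>' - Ff t \<rho>"
    using sol_cmp(1)[OF s s'] by (simp add: Ff_def algebra_simps)
qed

lemma F_deriv:
  assumes t: "2 \<le> t" and r: "1 < \<rho>0" "\<rho>0 < real t"
  shows "(Ff t has_real_derivative (- y_t t \<rho>0)) (at \<rho>0)"
  unfolding has_field_derivative_iff
proof -
  let ?q = "\<lambda>z. (Ff t z - Ff t \<rho>0) / (z - \<rho>0)"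
  have ev: "eventually (\<lambda>z. norm (?q z - (- y_t t \<rho>0)) \<le> \<bar>y_t t z - y_t t \<rho>0\<bar>) (at \<rho>0)"
    unfolding eventually_at
  proof (intro exI[of _ "min (\<rho>0 - 1) (real t - \<rho>0)"] conjI ballI impI)
    show "0 < min (\<rho>0 - 1) (real t - \<rho>0)" using r by simp
    fix z :: real assume z: "z \<noteq> \<rho>0 \<and> dist z \<rho>0 < min (\<rho>0 - 1) (real t - \<rho>0)"
    have "\<bar>z - \<rho>0\<bar> < min (\<rho>0 - 1) (real t - \<rho>0)" using z by (simp add: dist_real_def)
    hence "z - \<rho>0 < min (\<rho>0 - 1) (real t - \<rho>0) \<and> - (z - \<rho>0) < min (\<rho>0 - 1) (real t - \<rho>0)"
      by (simp only: abs_less_iff)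
    moreover have "min (\<rho>0 - 1) (real t - \<rho>0) \<le> \<rho>0 - 1" "min (\<rho>0 - 1) (real t - \<rho>0) \<le> real t - \<rho>0" by simp_all
    ultimately have zr: "1 < z" "z < real t" by linarith+
    obtain h where h: "h = Ff t z - Ff t \<rho>0" by blast
    obtain dd where dd_def: "dd = z - \<rho>0" by blast
    obtain q where q: "q = ?q z" by blast
    obtain Y0 where Y0: "Y0 = y_t t \<rho>0" by blast
    obtain Y1 where Y1: "Y1 = y_t t z" by blast
    have dd: "dd \<noteq> 0" using z by (simp add: dd_def)
    have b1: "h \<le> - dd * Y0" and b2: "- dd * Y1 \<le> h"
      using F_bounds[OF t r zr] by (simp_all add: h dd_def Y0 Y1)
    have q': "q = h / dd" using q h dd_def by simp
    have qd: "dd * q = h" using dd q' by simp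
    have "dd * (q + Y0) = h + dd * Y0" using qd by (simp add: distrib_left)
    hence c1: "dd * (q + Y0) \<le> 0" using b1 by linarith
    have "dd * (q + Y1) = h + dd * Y1" using qd by (simp add: distrib_left)
    hence c2: "dd * (q + Y1) \<ge> 0" using b2 by linarith
    have "norm (q - (- Y0)) \<le> \<bar>Y1 - Y0\<bar>"
    proof (cases "dd > 0")
      case True
      hence "q + Y0 \<le> 0" "q + Y1 \<ge> 0" using c1 c2 by (simp_all add: mult_le_0_iff zero_le_mult_iff)
      thus ?thesis by simp
    next
      case False
      hence "dd < 0" using dd by simp
      hence "q + Y0 \<ge> 0" "q + Y1 \<le> 0" using c1 c2 by (simp_all add: mult_le_0_iff zero_le_mult_iff)
      thus ?thesis by simp
    qed
    thus "norm (?q z - (- y_t t \<rho>0)) \<le> \<bar>y_t t z - y_t t \<rho>0\<bar>" using q Y0 Y1 by simp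
  qed
  have "((\<lambda>z. \<bar>y_t t z - y_t t \<rho>0\<bar>) \<longlongrightarrow> 0) (at \<rho>0)"
    using Y_cont[OF t r] by (intro tendsto_rabs_zero LIM_zero)
  from Lim_null_comparison[OF ev this] show "(?q \<longlongrightarrow> - y_t t \<rho>0) (at \<rho>0)"
    by (rule LIM_zero_cancel)
qed

lemma L0_tilde_eq:
  assumes t: "2 \<le> t" and r: "1 < \<rho>" "\<rho> < real t"
  shows "L0_tilde \<rho> k t = \<rho> * ln (\<rho> * k) - ln k - \<rho> + 1 + Ff t \<rho>"
proof -
  let ?C = "\<rho> * ln (\<rho> * k) - ln k - \<rho> + 1"
  define x where "x = x_t t \<rho>"
  define y where "y = y_t t \<rho>"
  have s: "sol t \<rho> x y" using sol_xy[OF t r] by (simp add: x_def y_def)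
  define ps where "ps i = exp (x + real i * y) / dcoef i" for i
  have ps0: "\<forall>i\<in>{1..t}. 0 \<le> ps i" using dcoef_pos by (simp add: ps_def less_imp_le)
  have pss: "(\<Sum>i=1..t. ps i) = 1" "(\<Sum>i=1..t. real i * ps i) = \<rho>" using s by (simp_all add: ps_def sol_def)
  have ps1: "\<forall>i\<in>{1..t}. ps i \<le> 1"
  proof
    fix i assume "i \<in> {1..t}"
    hence "ps i \<le> (\<Sum>i=1..t. ps i)" using ps0 by (intro member_le_sum) auto
    thus "ps i \<le> 1" using pss by simp
  qed
  have ent: "(\<Sum>i=1..t. ps i * ln (ps i * dcoef i)) = x + \<rho> * y" using sol_ent[OF s] by (simp add: ps_def)
  show ?thesis unfolding L0_tilde_def
  proof (rule cSup_eq_maximum)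
    show "?C + Ff t \<rho> \<in> {?C - (\<Sum>i=1..t. p i * ln (p i * dcoef i)) | p :: nat \<Rightarrow> real.
        (\<forall>i\<in>{1..t}. 0 \<le> p i \<and> p i \<le> 1) \<and>
        (\<Sum>i=1..t. p i) = 1 \<and> (\<Sum>i=1..t. real i * p i) = \<rho>}"
      using ps0 ps1 pss ent by (intro CollectI exI[of _ ps]) (simp add: Ff_def x_def y_def)
  next
    fix v assume "v \<in> {?C - (\<Sum>i=1..t. p i * ln (p i * dcoef i)) | p :: nat \<Rightarrow> real.
        (\<forall>i\<in>{1..t}. 0 \<le> p i \<and> p i \<le> 1) \<and>
        (\<Sum>i=1..t. p i) = 1 \<and> (\<Sum>i=1..t. real i * p i) = \<rho>}"
    then obtain p where v: "v = ?C - (\<Sum>i=1..t. p i * ln (p i * dcoef i))"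
      and p: "\<forall>i\<in>{1..t}. 0 \<le> p i \<and> p i \<le> 1" "(\<Sum>i=1..t. p i) = 1" "(\<Sum>i=1..t. real i * p i) = \<rho>"
      by blast
    have q: "(\<Sum>i=1..t. exp (x + real i * y) / dcoef i) = 1" using s by (simp add: sol_def)
    have "(\<Sum>i=1..t. p i * (x + real i * y)) \<le> (\<Sum>i=1..t. p i * ln (p i * dcoef i))"
      using p by (intro gibbs(1)[OF _ _ q]) auto
    moreover have "(\<Sum>i=1..t. p i * (x + real i * y)) = x + \<rho> * y"
      unfolding lin_sum using p by (simp add: mult.commute)
    ultimately show "v \<le> ?C + Ff t \<rho>" using v by (simp add: Ff_def x_def y_def)
  qed
qed


lemma ident_nhds: "((\<lambda>x::real. x) \<longlongrightarrow> a) (nhds a)"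
  using tendsto_at_iff_tendsto_nhds[of "\<lambda>x. x" a] by simp

theorem lemma35:
  fixes t :: nat and n k :: real
  assumes "t > 0" and "n > 0" and "k > 0" and "1 < n / k" and "n / k < real t"
  shows "((\<lambda>k'. L0_hat n k' t) has_real_derivative
            (- (n / k^2) * (ln n - y_t t (n / k)) + n / k^2 - 1 / k)) (at k) \<and>
         ((\<lambda>n'. L0_hat n' k t) has_real_derivative
            ((ln n - y_t t (n / k)) / k)) (at n)"
proof -
  have t: "2 \<le> t" using assms(4,5) by linarith
  have dF: "(Ff t has_real_derivative (- y_t t (n / k))) (at (n / k))"
    using F_deriv[OF t assms(4,5)] .
  have L: "L0_hat n' k' t = n' / k' * ln n' - ln k' - n' / k' + 1 + Ff t (n' / k')"
    if "k' > 0" "1 < n' / k'" "n' / k' < real t" for n' k'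
    using that L0_tilde_eq[OF t that(2,3), of k'] by (simp add: L0_hat_def)
  have cont_k: "((\<lambda>k'. n / k') \<longlongrightarrow> n / k) (nhds k)"
    using assms(3) by (intro tendsto_divide tendsto_const ident_nhds) auto
  have cont_n: "((\<lambda>n'. n' / k) \<longlongrightarrow> n / k) (nhds n)"
    using assms(3) by (intro tendsto_divide tendsto_const ident_nhds) auto
  have evk: "eventually (\<lambda>k'. L0_hat n k' t = n / k' * ln n - ln k' - n / k' + 1 + Ff t (n / k')) (nhds k)"
  proof -
    have "eventually (\<lambda>k'. k' > 0) (nhds k)" using assms(3) by (intro order_tendstoD(1)[OF ident_nhds]) auto
    moreover have "eventually (\<lambda>k'. 1 < n / k') (nhds k)" using order_tendstoD(1)[OF cont_k assms(4)] .
    moreover have "eventually (\<lambda>k'. n / k' < real t) (nhds k)" using order_tendstoD(2)[OF cont_k assms(5)] .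
    ultimately show ?thesis by eventually_elim (rule L)
  qed
  have evn: "eventually (\<lambda>n'. L0_hat n' k t = n' / k * ln n' - ln k - n' / k + 1 + Ff t (n' / k)) (nhds n)"
  proof -
    have "eventually (\<lambda>n'. 1 < n' / k) (nhds n)" using order_tendstoD(1)[OF cont_n assms(4)] .
    moreover have "eventually (\<lambda>n'. n' / k < real t) (nhds n)" using order_tendstoD(2)[OF cont_n assms(5)] .
    ultimately show ?thesis by eventually_elim (rule L[OF assms(3)])
  qed
  have dk1: "((\<lambda>k'. n / k') has_real_derivative (- n / k^2)) (at k)"
    using assms(3) by (auto intro!: derivative_eq_intros simp: power2_eq_square)
  have dk2: "((\<lambda>k'. n / k' * ln n - ln k' - n / k' + 1) has_real_derivative
      (- n / k^2 * ln n - 1 / k + n / k^2)) (at k)"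
    using assms(3) by (auto intro!: derivative_eq_intros simp: power2_eq_square field_simps)
  have dk: "((\<lambda>k'. n / k' * ln n - ln k' - n / k' + 1 + Ff t (n / k')) has_real_derivative
      ((- n / k^2 * ln n - 1 / k + n / k^2) + (- y_t t (n / k)) * (- n / k^2))) (at k)"
    by (rule DERIV_add[OF dk2 DERIV_chain2[OF dF dk1]])
  have dn1: "((\<lambda>n'. n' / k) has_real_derivative (1 / k)) (at n)"
    using assms(3) by (auto intro!: derivative_eq_intros)
  have dn2: "((\<lambda>n'. n' / k * ln n' - ln k - n' / k + 1) has_real_derivative
      (ln n / k)) (at n)"
    using assms(2,3) by (auto intro!: derivative_eq_intros simp: field_simps)
  have dn: "((\<lambda>n'. n' / k * ln n' - ln k - n' / k + 1 + Ff t (n' / k)) has_real_derivative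
      (ln n / k + (- y_t t (n / k)) * (1 / k))) (at n)"
    by (rule DERIV_add[OF dn2 DERIV_chain2[OF dF dn1]])
  show ?thesis
  proof
    show "((\<lambda>k'. L0_hat n k' t) has_real_derivative
            (- (n / k^2) * (ln n - y_t t (n / k)) + n / k^2 - 1 / k)) (at k)"
      using dk by (subst DERIV_cong_ev[OF refl evk]) (simp_all add: algebra_simps)
    show "((\<lambda>n'. L0_hat n' k t) has_real_derivative ((ln n - y_t t (n / k)) / k)) (at n)"
      using dn by (subst DERIV_cong_ev[OF refl evn]) (simp_all add: diff_divide_distrib)
  qed
qed

end
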